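(* Let $m$ be a positive integer and let $\delta$ be a positive divisor of $\lambda(m)$. Then $$\prod_{\substack{a\in U_m\\ \mathrm{ind}_m(a)=\delta}}a\equiv\begin{cases}-1\pmod m,&\text{if }\delta=2\text{ and }m\text{ has a primitive root,}\\ 1\pmod m,&\text{otherwise.}\end{cases}$$
   Context: $U_m$ denotes the set of invertible residue classes in $\mathbb{Z}/m\mathbb{Z}$ (the product runs over one representative of each such class). For $a$ coprime to $m$, $\mathrm{ind}_m(a)$ is the multiplicative order of $a$ modulo $m$, i.e. the smallest positive $k$ with $a^k\equiv 1\pmod m$. $\lambda(m)$ is the Carmichael function: the smallest $k>0$ such that $a^k\equiv 1\pmod m$ for all $a\in U_m$. A primitive root modulo $m$ is an element of $U_m$ of order $\phi(m)$, where $\phi$ is Euler's totient function. *)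

theory Defs
  imports "HOL-Number_Theory.Number_Theory"
begin

end

theory Submission
  imports Defs
begin

lemma pair_prod:
  fixes S :: "nat set" and f :: "nat \<Rightarrow> nat" and c m :: nat
  assumes fin: "finite S" and fS: "\<And>x. x\<in>S \<Longrightarrow> f x \<in> S"
    and neq: "\<And>x. x\<in>S \<Longrightarrow> f x \<noteq> x" and inv: "\<And>x. x\<in>S \<Longrightarrow> f (f x) = x"
    and c: "\<And>x. x\<in>S \<Longrightarrow> [x * f x = c] (mod m)"
  shows "[\<Prod>S = c ^ (card S div 2)] (mod m)"
proof -
  define A where "A = {x\<in>S. x < f x}"
  have fA: "f ` A = {x\<in>S. f x < x}"
  proof
    show "f ` A \<subseteq> {x\<in>S. f x < x}" using fS inv by (auto simp: A_def)
    show "{x\<in>S. f x < x} \<subseteq> f ` A"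
    proof
      fix x assume x: "x \<in> {x\<in>S. f x < x}"
      hence "f x \<in> A" using fS inv by (auto simp: A_def)
      moreover have "x = f (f x)" using inv x by auto
      ultimately show "x \<in> f ` A" by blast
    qed
  qed
  have S0: "S = A \<union> {x\<in>S. f x < x}" using neq by (auto simp: A_def nat_neq_iff)
  have S: "S = A \<union> f ` A" by (subst fA) (rule S0)
  have disj: "A \<inter> f ` A = {}"
  proof -
    have "A \<inter> {x\<in>S. f x < x} = {}" by (auto simp: A_def)
    thus ?thesis by (subst fA)
  qed
  have inj: "inj_on f A"
  proof (rule inj_onI)
    fix x y assume xy: "x \<in> A" "y \<in> A" "f x = f y"
    hence "x \<in> S" "y \<in> S" by (auto simp: A_def)
    thus "x = y" using inv xy(3) by metis
  qed
  have finA: "finite A" using fin A_def by auto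
  have "\<Prod>(A \<union> f ` A) = \<Prod>A * \<Prod>(f ` A)"
    by (rule prod.union_disjoint) (simp_all add: finA disj)
  hence "\<Prod>S = \<Prod>A * \<Prod>(f ` A)" by (subst S)
  also have "\<Prod>(f ` A) = (\<Prod>x\<in>A. f x)" using prod.reindex[OF inj, of id] by simp
  also have "\<Prod>A * (\<Prod>x\<in>A. f x) = (\<Prod>x\<in>A. x * f x)" by (simp add: prod.distrib)
  finally have P: "\<Prod>S = (\<Prod>x\<in>A. x * f x)" .
  have "[(\<Prod>x\<in>A. x * f x) = (\<Prod>x\<in>A. c)] (mod m)"
    by (rule cong_prod) (rule c, simp add: A_def)
  moreover have "card S = 2 * card A"
    using card_Un_disjoint[OF finA _ disj] finA card_image[OF inj] S by simp
  ultimately show ?thesis using P by simp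
qed


lemma ord_ge3_prod:
  fixes m \<delta> :: nat
  assumes m: "m \<ge> 2" and d: "\<delta> \<ge> 3"
  shows "[\<Prod>{a\<in>totatives m. ord m a = \<delta>} = 1] (mod m)"
proof -
  define S where "S = {a\<in>totatives m. ord m a = \<delta>}"
  define f where "f x = x ^ (\<delta> - 1) mod m" for x
  have key: "[x * f x = 1] (mod m)" if "x \<in> S" for x
  proof -
    have "ord m x = \<delta>" using that by (simp add: S_def)
    hence "[x ^ \<delta> = 1] (mod m)" using ord[of x m] by simp
    moreover have "x * x ^ (\<delta> - 1) = x ^ \<delta>" using d
      by (metis Suc_diff_1 bot_nat_0.not_eq_extremum not_numeral_le_zero power_Suc)
    ultimately show ?thesis unfolding f_def cong_def by (simp add: mod_mult_right_eq)
  qed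
  have cop: "coprime m x" "x < m" if "x \<in> S" for x
    using that m by (auto simp: S_def in_totatives_iff coprime_commute intro: totatives_less)
  have fS: "f x \<in> S" if x: "x \<in> S" for x
  proof -
    have "f x \<in> totatives m" unfolding f_def using power_in_totatives[of m x] cop[OF x] m by auto
    moreover have "ord m (f x) = \<delta>"
    proof -
      have k: "[(x * f x) ^ d = 1] (mod m)" for d
        using cong_pow[OF key[OF x], of d] by simp
      have "[f x ^ d = 1] (mod m) \<longleftrightarrow> [x ^ d = 1] (mod m)" for d
      proof
        assume "[f x ^ d = 1] (mod m)"
        hence "[x ^ d * f x ^ d = x ^ d * 1] (mod m)" by (intro cong_mult) auto
        thus "[x ^ d = 1] (mod m)" using k[of d]
          by (metis cong_sym cong_trans mult.right_neutral power_mult_distrib)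
      next
        assume "[x ^ d = 1] (mod m)"
        hence "[x ^ d * f x ^ d = 1 * f x ^ d] (mod m)" by (intro cong_mult) auto
        thus "[f x ^ d = 1] (mod m)" using k[of d]
          by (metis cong_sym cong_trans mult_1 power_mult_distrib)
      qed
      hence "ord m (f x) dvd d \<longleftrightarrow> ord m x dvd d" for d by (simp add: ord_divides')
      hence "ord m (f x) = ord m x" by (meson dvd_antisym dvd_refl)
      thus ?thesis using x by (simp add: S_def)
    qed
    ultimately show ?thesis by (simp add: S_def)
  qed
  have neq: "f x \<noteq> x" if x: "x \<in> S" for x
  proof
    assume "f x = x"
    hence "[x ^ 2 = 1] (mod m)" using key[OF x] by (simp add: power2_eq_square)
    hence "ord m x dvd 2" by (simp add: ord_divides')
    hence "\<delta> dvd 2" using x by (simp add: S_def)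
    thus False using d dvd_imp_le[of \<delta> 2] by simp
  qed
  have inv: "f (f x) = x" if x: "x \<in> S" for x
  proof -
    have "[x * (f x * f (f x)) = x * 1] (mod m)" using key[OF fS[OF x]] by (intro cong_mult) auto
    hence "[(x * f x) * f (f x) = x] (mod m)" by (simp add: mult.assoc)
    moreover have "[(x * f x) * f (f x) = 1 * f (f x)] (mod m)" using key[OF x] by (intro cong_mult) auto
    ultimately have "[f (f x) = x] (mod m)" by (metis cong_sym cong_trans mult_1)
    moreover have "f (f x) < m" using m by (simp add: f_def)
    ultimately show ?thesis using cop[OF x] cong_less_modulus_unique_nat by blast
  qed
  have "[\<Prod>S = 1 ^ (card S div 2)] (mod m)"
    by (rule pair_prod[where f = f]) (use key fS neq inv in \<open>auto simp: S_def\<close>)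
  thus ?thesis by (simp add: S_def)
qed


lemma minus_one_ord2:
  fixes m :: nat assumes m: "m \<ge> 3"
  shows "m - 1 \<in> totatives m" "ord m (m - 1) = 2"
proof -
  show "m - 1 \<in> totatives m" using m minus_one_in_totatives by simp
  have "(m - 1)^2 = m * (m - 2) + 1" using m
  proof -
    obtain k where "m = k + 3" using m by (metis add.commute le_Suc_ex)
    thus ?thesis by (simp add: power2_eq_square algebra_simps)
  qed
  moreover have "[m * (m - 2) + 1 = 0 + 1] (mod m)" by (intro cong_add) (auto simp: cong_0_iff)
  ultimately have "[(m - 1)^2 = 1] (mod m)" by simp
  moreover have "\<not> [m - 1 = 1] (mod m)"
  proof
    assume "[m - 1 = 1] (mod m)"
    hence "m - 1 = 1" using m cong_less_modulus_unique_nat by fastforce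
    thus False using m by simp
  qed
  ultimately show "ord m (m - 1) = 2" by (simp add: ord_eq_2_iff)
qed

lemma ord2_in_totatives_iff:
  fixes m x :: nat assumes m: "m \<ge> 2"
  shows "x \<in> totatives m \<and> ord m x = 2 \<longleftrightarrow> x \<in> totatives m \<and> x \<noteq> 1 \<and> [x^2 = 1] (mod m)"
proof -
  have "x \<in> totatives m \<Longrightarrow> [x = 1] (mod m) \<longleftrightarrow> x = 1"
    using m totatives_less[of x m] cong_less_modulus_unique_nat[of x 1 m] by auto
  thus ?thesis by (auto simp: ord_eq_2_iff)
qed

lemma cyclic_ord2:
  fixes m g :: nat assumes m: "m \<ge> 3" and g: "residue_primroot m g"
  shows "{a\<in>totatives m. ord m a = 2} = {m - 1}"
proof -
  have bij: "bij_betw (\<lambda>i. g ^ i mod m) {..<totient m} (totatives m)"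
    using residue_primroot_is_generator[of m g] m g by simp
  have og: "ord m g = totient m" using g by (simp add: residue_primroot_def)
  have half: "y = g ^ (totient m div 2) mod m" if y: "y \<in> totatives m" "ord m y = 2" for y
  proof -
    obtain i where i: "i < totient m" "y = g ^ i mod m"
      using bij y(1) unfolding bij_betw_def by auto
    have y1: "y \<noteq> 1" "[y^2 = 1] (mod m)" using ord2_in_totatives_iff[of m y] m y by auto
    have "[(g ^ i) ^ 2 = 1] (mod m)" using y1(2) i(2) by (simp add: cong_def power_mod)
    hence "totient m dvd i * 2" by (simp add: ord_divides' og power_mult[symmetric])
    then obtain t where t: "i * 2 = totient m * t" by auto
    have "totient m * t < totient m * 2" using t i(1) by linarith
    hence "t < 2" by simp
    moreover have "t \<noteq> 0"
    proof
      assume "t = 0" hence "i = 0" using t by simp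
      hence "y = 1" using i m by simp
      thus False using y1 by simp
    qed
    ultimately have "t = 1" by simp
    hence "i = totient m div 2" using t by simp
    thus ?thesis using i by simp
  qed
  show ?thesis
  proof (intro equalityI subsetI)
    fix x assume "x \<in> {a\<in>totatives m. ord m a = 2}"
    hence "x = g ^ (totient m div 2) mod m" using half by auto
    moreover have "m - 1 = g ^ (totient m div 2) mod m"
      using half minus_one_ord2[OF m] by blast
    ultimately show "x \<in> {m - 1}" by simp
  qed (use minus_one_ord2[OF m] in auto)
qed


lemma noncyclic_prod:
  fixes m b :: nat assumes m: "m \<ge> 3" and b: "b \<in> totatives m" "[b^2 = 1] (mod m)" "b \<noteq> 1" "b \<noteq> m - 1"
  shows "[\<Prod>{a\<in>totatives m. ord m a = 2} = 1] (mod m)"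
proof -
  define T where "T = {a\<in>totatives m. ord m a = 2}"
  define H where "H = {x\<in>totatives m. [x^2 = 1] (mod m)}"
  have T: "T = {x\<in>totatives m. x \<noteq> 1 \<and> [x^2 = 1] (mod m)}"
    using ord2_in_totatives_iff[of m] m unfolding T_def by auto
  have HT: "H = insert 1 T" using m by (auto simp: H_def T)
  have "1 \<notin> T" by (simp add: T)
  moreover have "finite T" by (simp add: T)
  ultimately have PH: "\<Prod>H = \<Prod>T" using HT by simp
  have lt: "x < m" "coprime m x" if "x \<in> totatives m" for x
    using that m totatives_less[of x m] by (auto simp: in_totatives_iff coprime_commute)
  have modin: "y mod m \<in> totatives m" if "coprime m y" for y
    using power_in_totatives[of m y 1] that m by simp
  have main: "[\<Prod>H = a ^ (card H div 2)] (mod m)" if a: "a \<in> T" for a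
  proof -
    define f where "f x = a * x mod m" for x
    have a1: "a \<in> totatives m" "a \<noteq> 1" "[a^2 = 1] (mod m)" using a by (auto simp: T)
    show ?thesis
    proof (rule pair_prod[where f = f])
      show "finite H" by (simp add: H_def)
    next
      fix x assume x: "x \<in> H"
      hence x1: "x \<in> totatives m" "[x^2 = 1] (mod m)" by (auto simp: H_def)
      have "coprime m (a * x)" using lt a1 x1 by simp
      hence "f x \<in> totatives m" unfolding f_def by (rule modin)
      moreover have "[(f x)^2 = a^2 * x^2] (mod m)" unfolding f_def
        by (simp add: cong_def power_mod power_mult_distrib)
      moreover have "[a^2 * x^2 = 1 * 1] (mod m)" using a1 x1 by (intro cong_mult)
      ultimately show "f x \<in> H" unfolding H_def by (auto intro: cong_trans)
      show "f x \<noteq> x"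
      proof
        assume "f x = x"
        hence "[a * x = 1 * x] (mod m)" using lt[OF x1(1)] by (simp add: f_def cong_def)
        hence "[a = 1] (mod m)" using cong_mult_rcancel_nat[of x m a 1] lt x1 by (simp add: coprime_commute)
        hence "a = 1" using lt a1 m cong_less_modulus_unique_nat[of a 1 m] by simp
        thus False using a1 by simp
      qed
      have "[a * (a * x) = (a^2) * x] (mod m)" by (simp add: power2_eq_square mult.assoc)
      moreover have "[(a^2) * x = 1 * x] (mod m)" using a1 by (intro cong_mult) auto
      ultimately have "[f (f x) = x] (mod m)" unfolding f_def
        by (simp add: cong_def mod_mult_right_eq)
      thus "f (f x) = x" using lt x1 m cong_less_modulus_unique_nat[of "f (f x)" x m] by (simp add: f_def)
      have "[x * f x = a * x^2] (mod m)" unfolding f_def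
        by (simp add: cong_def mod_mult_right_eq power2_eq_square ac_simps)
      moreover have "[a * x^2 = a * 1] (mod m)" using x1 by (intro cong_mult) auto
      ultimately show "[x * f x = a] (mod m)" by (auto intro: cong_trans)
    qed
  qed
  define n where "n = card H div 2"
  define a where "a = m - 1"
  have aT: "a \<in> T" using minus_one_ord2[OF m] unfolding a_def T_def by simp
  have bT: "b \<in> T" using b by (simp add: T)
  define c where "c = a * b mod m"
  have cT: "c \<in> T"
  proof -
    have a1: "a \<in> totatives m" "[a^2 = 1] (mod m)" using aT by (auto simp: T)
    have "coprime m (a * b)" using lt a1 b by simp
    hence "c \<in> totatives m" unfolding c_def by (rule modin)
    moreover have "[c^2 = a^2 * b^2] (mod m)" unfolding c_def
      by (simp add: cong_def power_mod power_mult_distrib)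
    moreover have "[a^2 * b^2 = 1 * 1] (mod m)" using a1 b by (intro cong_mult)
    moreover have "c \<noteq> 1"
    proof
      assume "c = 1"
      hence "[a * b = 1] (mod m)" using m by (simp add: c_def cong_def)
      hence "[a * (a * b) = a * 1] (mod m)" by (intro cong_mult) auto
      moreover have "[a * (a * b) = (a^2) * b] (mod m)" by (simp add: power2_eq_square mult.assoc)
      moreover have "[(a^2) * b = 1 * b] (mod m)" using a1 by (intro cong_mult) auto
      ultimately have "[b = a] (mod m)" by (metis cong_sym cong_trans mult_1 mult_1_right)
      hence "b = a" using lt a1 b cong_less_modulus_unique_nat[of b a m] by simp
      thus False using b by (simp add: a_def)
    qed
    ultimately show ?thesis unfolding T by (auto intro: cong_trans)
  qed
  have Pa: "[\<Prod>H = a ^ n] (mod m)" using main[OF aT] by (simp add: n_def)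
  have Pb: "[\<Prod>H = b ^ n] (mod m)" using main[OF bT] by (simp add: n_def)
  have Pc: "[\<Prod>H = c ^ n] (mod m)" using main[OF cT] by (simp add: n_def)
  have "[c ^ n = a ^ n * b ^ n] (mod m)" unfolding c_def
    by (simp add: cong_def power_mod power_mult_distrib)
  moreover have "[a ^ n * b ^ n = \<Prod>H * \<Prod>H] (mod m)" using Pa Pb by (intro cong_mult) (auto simp: cong_sym)
  ultimately have PP: "[\<Prod>H = \<Prod>H * \<Prod>H] (mod m)" using Pc by (metis cong_trans)
  have "[\<Prod>H * \<Prod>H = a ^ n * a ^ n] (mod m)" using Pa by (intro cong_mult)
  moreover have "a ^ n * a ^ n = (a^2) ^ n" by (simp add: power2_eq_square power_mult_distrib)
  moreover have "[(a^2) ^ n = 1 ^ n] (mod m)" using aT by (intro cong_pow) (simp add: T)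
  ultimately have "[\<Prod>H * \<Prod>H = 1] (mod m)" by (metis cong_trans power_one)
  hence "[\<Prod>H = 1] (mod m)" using cong_trans[OF PP] by blast
  thus ?thesis using PH by (simp add: T_def)
qed


lemma noncyclic_sqrt:
  fixes m :: nat assumes m: "m \<ge> 3" and nc: "\<not> (\<exists>g. residue_primroot m g)"
  shows "\<exists>b. b \<in> totatives m \<and> [b^2 = 1] (mod m) \<and> b \<noteq> 1 \<and> b \<noteq> m - 1"
proof -
  have ncm: "m \<notin> cyclic_moduli" using nc residue_primroot_iff_in_cyclic_moduli by blast
  have tot: "b \<in> totatives m" if "b < m" "[b^2 = 1] (mod m)" for b
  proof -
    have "coprime (b^2) m" using cong_imp_coprime[of 1 "b^2" m] that(2) by (simp add: cong_sym)
    hence "coprime b m" by simp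
    moreover have "b \<noteq> 0" using \<open>coprime b m\<close> m by (intro notI) simp
    ultimately show ?thesis using that by (simp add: in_totatives_iff)
  qed
  show ?thesis
  proof (cases "\<exists>k. m = 2 ^ k")
    case True
    then obtain k where mk: "m = 2 ^ k" by auto
    have "k \<noteq> 0 \<and> k \<noteq> 1 \<and> k \<noteq> 2" using ncm mk by (auto simp: cyclic_moduli_def)
    hence "k \<ge> 3" by linarith
    then obtain j where kj: "k = j + 3" by (intro that[of "k - 3"]) simp
    define b where "b = 2 ^ (j + 2) + (1::nat)"
    have mj: "m = 2 * 2 ^ (j + 2)" using mk kj by (simp add: power_add)
    have b2: "b^2 = m * (2 ^ (j + 1) + 1) + 1"
      unfolding b_def mj by (simp add: power2_eq_square algebra_simps power_add)
    have "[m * (2 ^ (j + 1) + 1) + 1 = 0 + 1] (mod m)" by (intro cong_add) (auto simp: cong_0_iff)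
    hence bc: "[b^2 = 1] (mod m)" using b2 by simp
    have p4: "(4::nat) \<le> 2 ^ (j + 2)" using power_increasing[of 2 "j+2" "2::nat"] by simp
    have "b < m" unfolding mj b_def using p4 by linarith
    moreover have "b \<noteq> 1" by (simp add: b_def)
    moreover have "b \<noteq> m - 1" unfolding mj b_def using p4 by linarith
    ultimately show ?thesis using tot bc by blast
  next
    case False
    have "m \<noteq> 0" using m by simp
    have "\<exists>p\<in>prime_factors m. p \<noteq> 2"
      using Ex_other_prime_factor[of m 2] False \<open>m \<noteq> 0\<close> by auto
    from divide_out_primepow_ex[OF \<open>m \<noteq> 0\<close> this]
    obtain p k m' where p: "p \<noteq> 2" "prime p" "p dvd m" "\<not>p dvd m'" "0 < k" "m = p ^ k * m'"
      by metis
    have "odd p"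
      using p primes_dvd_imp_eq[of 2 p] by auto
    from p have coprime: "coprime (p ^ k) m'"
      using p prime_imp_coprime by auto
    have "m \<in> cyclic_moduli" if "m' = 1"
      using that p \<open>odd p\<close> by (auto simp: cyclic_moduli_def)
    moreover have "m \<in> cyclic_moduli" if "m' = 2"
    proof -
      have "m = 2 * p ^ k" using p that by (simp add: mult.commute)
      thus "m \<in> cyclic_moduli" using p \<open>odd p\<close>
        unfolding cyclic_moduli_def by blast
    qed
    moreover have "m' \<noteq> 0" using p m by (intro notI) auto
    ultimately have "m' \<noteq> 0 \<and> m' \<noteq> 1 \<and> m' \<noteq> 2" using ncm by auto
    hence m': "m' > 2" by linarith
    define q where "q = p ^ k"
    have "p \<ge> 2" using p prime_ge_2_nat by blast
    hence "p \<ge> 3" using p by linarith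
    hence "p \<le> q" unfolding q_def using power_increasing[of 1 k p] p(5) by simp
    hence q3: "q \<ge> 3" using \<open>p \<ge> 3\<close> by linarith
    have mq: "m = q * m'" using p by (simp add: q_def)
    have cq: "coprime q m'" using coprime by (simp add: q_def)
    obtain x where x: "[x = 1] (mod q)" "[x = m' - 1] (mod m')"
      using binary_chinese_remainder_nat[OF cq] by blast
    define b where "b = x mod m"
    have "[x mod m = x] (mod q)" by (rule cong_dvd_modulus_nat[of _ _ m]) (simp_all add: mq)
    hence bq: "[b = 1] (mod q)" using cong_trans x(1) unfolding b_def by blast
    have "[x mod m = x] (mod m')" by (rule cong_dvd_modulus_nat[of _ _ m]) (simp_all add: mq)
    hence bm': "[b = m' - 1] (mod m')" using cong_trans x(2) unfolding b_def by blast
    have "[b^2 = 1^2] (mod q)" using bq by (intro cong_pow)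
    hence s1: "[b^2 = 1] (mod q)" by simp
    have "[b^2 = (m' - 1)^2] (mod m')" using bm' by (intro cong_pow)
    moreover have "(m' - 1)^2 = m' * (m' - 2) + 1"
    proof -
      obtain t where "m' = t + 3" using m' by (intro that[of "m' - 3"]) simp
      thus ?thesis by (simp add: power2_eq_square algebra_simps)
    qed
    moreover have "[m' * (m' - 2) + 1 = 0 + 1] (mod m')" by (intro cong_add) (auto simp: cong_0_iff)
    ultimately have s2: "[b^2 = 1] (mod m')" using cong_trans by fastforce
    have bc: "[b^2 = 1] (mod m)" using coprime_cong_mult_nat[OF s1 s2 cq] mq by simp
    have "b < m" using m by (simp add: b_def)
    moreover have "b \<noteq> 1"
    proof
      assume "b = 1"
      hence "[1 = m' - 1] (mod m')" using bm' by simp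
      hence "1 = m' - 1" using m' cong_less_modulus_unique_nat[of 1 "m' - 1" m'] by simp
      thus False using m' by simp
    qed
    moreover have "b \<noteq> m - 1"
    proof
      assume "b = m - 1"
      hence "[m - 1 + 1 = 1 + 1] (mod q)" using bq by (intro cong_add) auto
      hence "[m = 1 + 1] (mod q)" using m by simp
      hence "[m = 2] (mod q)" by (simp only: one_add_one)
      moreover have "[m = 0] (mod q)" using mq by (simp add: cong_0_iff)
      ultimately have "[2 = 0] (mod q)" using cong_trans cong_sym by blast
      hence "q dvd 2" by (simp add: cong_0_iff)
      thus False using q3 dvd_imp_le[of q 2] by simp
    qed
    ultimately show ?thesis using tot bc by blast
  qed
qed


theorem theorem1p5:
  fixes m \<delta> :: nat
  assumes "m > 0" and "\<delta> > 0" and "\<delta> dvd Carmichael m"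
  shows "[int (\<Prod>a\<in>{a \<in> totatives m. ord m a = \<delta>}. a) =
          (if \<delta> = 2 \<and> (\<exists>g. residue_primroot m g) then -1 else 1)] (mod int m)"
proof (cases "m = 1")
  case True
  thus ?thesis by simp
next
  case False
  hence m2: "m \<ge> 2" using assms(1) by linarith
  have one: "[int (\<Prod>a\<in>{a \<in> totatives m. ord m a = \<delta>}. a) = 1] (mod int m)"
    if "[(\<Prod>a\<in>{a \<in> totatives m. ord m a = \<delta>}. a) = 1] (mod m)"
  proof -
    have "[int (\<Prod>a\<in>{a \<in> totatives m. ord m a = \<delta>}. a) = int 1] (mod int m)"
      using that by (simp only: cong_int_iff)
    thus ?thesis by (simp only: of_nat_1)
  qed
  consider "\<delta> = 1" | "\<delta> = 2" | "\<delta> \<ge> 3" using assms(2) by linarith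
  thus ?thesis
  proof cases
    case 1
    have "{a \<in> totatives m. ord m a = \<delta>} = {1}"
      using elements_with_ord_1[of m] assms(1) 1 by simp
    thus ?thesis using 1 by simp
  next
    case 2
    have m3: "m \<ge> 3"
    proof (rule ccontr)
      assume "\<not> m \<ge> 3"
      hence "m = 2" using m2 by linarith
      thus False using assms(3) 2 by simp
    qed
    show ?thesis
    proof (cases "\<exists>g. residue_primroot m g")
      case True
      then obtain g where g: "residue_primroot m g" by blast
      have "{a \<in> totatives m. ord m a = \<delta>} = {m - 1}" using cyclic_ord2[OF m3 g] 2 by simp
      moreover have "[int (m - 1) = -1] (mod int m)"
        using m3 by (simp add: cong_iff_dvd_diff of_nat_diff)
      ultimately show ?thesis using True 2 by simp
    next
      case False
      then obtain b where "b \<in> totatives m" "[b^2 = 1] (mod m)" "b \<noteq> 1" "b \<noteq> m - 1"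
        using noncyclic_sqrt[OF m3] by blast
      hence "[(\<Prod>a\<in>{a \<in> totatives m. ord m a = \<delta>}. a) = 1] (mod m)"
        using noncyclic_prod[OF m3] 2 by simp
      thus ?thesis using one False by simp
    qed
  next
    case 3
    thus ?thesis using one ord_ge3_prod[OF m2 3] by simp
  qed
qed

end
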